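(* $(\mathcal{K}(X),\overline{\mathbb{F}})$, with the Hausdorff metric, is strongly (cofinitely) sensitive if and only if $(X,\mathbb{F})$ is strongly (cofinitely) sensitive.
   Context: $(X,d)$ compact metric, $\mathbb{F}=(f_n)$ continuous self-maps, $\omega_n=f_n\circ\cdots\circ f_1$. Strongly (cofinitely) sensitive: there is $\delta>0$ such that for every $x$ and every neighborhood $U$ of $x$ there is $K$ with $\mathrm{diam}(\omega_n(U))>\delta$ for all $n\ge K$. $\mathcal{K}(X)$: non-empty compact subsets with the Hausdorff metric $d_H$; induced system $\overline{\omega}_n(A)=\omega_n(A)$, notion defined analogously using $d_H$. *)

theory Defs
  imports "HOL-Analysis.Analysis"
begin

definition hausdorff_dist :: "'a::metric_space set \<Rightarrow> 'a set \<Rightarrow> real" where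
  "hausdorff_dist A B = max (SUP a\<in>A. infdist a B) (SUP b\<in>B. infdist b A)"

definition hyperspace :: "'a::metric_space set \<Rightarrow> 'a set set" where
  "hyperspace X = {A. A \<subseteq> X \<and> compact A \<and> A \<noteq> {}}"

fun omega :: "(nat \<Rightarrow> 'a \<Rightarrow> 'a) \<Rightarrow> nat \<Rightarrow> 'a \<Rightarrow> 'a" where
  "omega f 0 = id"
| "omega f (Suc n) = f (Suc n) \<circ> omega f n"

definition gdiam :: "('b \<Rightarrow> 'b \<Rightarrow> real) \<Rightarrow> 'b set \<Rightarrow> real" where
  "gdiam d S = (SUP p\<in>S \<times> S. d (fst p) (snd p))"

definition gneighbourhood :: "'b set \<Rightarrow> ('b \<Rightarrow> 'b \<Rightarrow> real) \<Rightarrow> 'b \<Rightarrow> 'b set \<Rightarrow> bool" where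
  "gneighbourhood M d x U \<longleftrightarrow> U \<subseteq> M \<and> (\<exists>e>0. {y\<in>M. d x y < e} \<subseteq> U)"

definition strongly_sensitive :: "'b set \<Rightarrow> ('b \<Rightarrow> 'b \<Rightarrow> real) \<Rightarrow> (nat \<Rightarrow> 'b \<Rightarrow> 'b) \<Rightarrow> bool" where
  "strongly_sensitive M d w \<longleftrightarrow>
     (\<exists>\<delta>>0. \<forall>x\<in>M. \<forall>U. gneighbourhood M d x U \<longrightarrow>
        (\<exists>K. \<forall>n\<ge>K. gdiam d (w n ` U) > \<delta>))"

end

theory Submission
  imports Defs
begin


lemma omega_in: "(\<And>n. n \<ge> 1 \<Longrightarrow> f n ` X \<subseteq> X) \<Longrightarrow> x \<in> X \<Longrightarrow> omega f n x \<in> X"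
  by (induction n) (auto simp: Suc_le_eq image_subset_iff)

lemma omega_cont: "(\<And>n. n \<ge> 1 \<Longrightarrow> f n ` X \<subseteq> X) \<Longrightarrow> (\<And>n. n \<ge> 1 \<Longrightarrow> continuous_on X (f n))
   \<Longrightarrow> continuous_on X (omega f n)"
proof (induction n)
  case 0 then show ?case by (simp add: continuous_on_id)
next
  case (Suc n)
  have "omega f n ` X \<subseteq> X" using omega_in[of f X] Suc.prems by blast
  moreover have "continuous_on X (f (Suc n))" using Suc.prems by simp
  ultimately show ?case using Suc
    by (simp add: continuous_on_compose2[of X "f (Suc n)" X "omega f n"])
qed

lemma hd_le_diam:
  fixes A B S :: "'a::metric_space set"
  assumes "bounded S" "A \<subseteq> S" "B \<subseteq> S" "A \<noteq> {}" "B \<noteq> {}"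
  shows "hausdorff_dist A B \<le> diameter S"
proof -
  have 1: "infdist a C \<le> diameter S" if h: "a \<in> S" "C \<subseteq> S" "C \<noteq> {}" for a C
  proof -
    obtain c where "c \<in> C" using h(3) by blast
    then show ?thesis using infdist_le[of c C a] diameter_bounded_bound[of S a c] h assms by auto
  qed
  show ?thesis unfolding hausdorff_dist_def
    using assms 1 by (auto intro!: cSUP_least)
qed

lemma infdist_le_hd:
  fixes A B S :: "'a::metric_space set"
  assumes "bounded S" "A \<subseteq> S" "B \<subseteq> S" "B \<noteq> {}" "a \<in> A"
  shows "infdist a B \<le> hausdorff_dist A B"
proof -
  obtain b where b: "b \<in> B" using assms by auto
  have "bdd_above ((\<lambda>a. infdist a B) ` A)"
    using assms b infdist_le[OF b] diameter_bounded_bound[of S _ b]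
    by (intro bdd_aboveI2[where M="diameter S"]) (meson order_trans subsetD)
  then have "infdist a B \<le> (SUP a\<in>A. infdist a B)" using assms by (intro cSUP_upper)
  then show ?thesis unfolding hausdorff_dist_def by simp
qed

lemma hd_extract:
  fixes A B :: "'a::metric_space set"
  assumes "A \<noteq> {}" "B \<noteq> {}" "hausdorff_dist A B > c"
  shows "\<exists>a\<in>A. \<exists>b\<in>B. dist a b > c"
proof (rule ccontr)
  assume "\<not> ?thesis"
  then have le: "\<And>a b. a \<in> A \<Longrightarrow> b \<in> B \<Longrightarrow> dist a b \<le> c" by (auto simp: not_less)
  have 1: "infdist a B \<le> c" if "a \<in> A" for a
    using assms(2) that le infdist_le by (meson all_not_in_conv order_trans)
  have 2: "infdist b A \<le> c" if "b \<in> B" for b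
    using assms(1) that le infdist_le by (metis all_not_in_conv dist_commute order_trans)
  have "hausdorff_dist A B \<le> c" unfolding hausdorff_dist_def
    using 1 2 assms by (auto intro!: cSUP_least)
  then show False using assms by simp
qed

lemma gdiam_extract:
  assumes "S \<noteq> {}" "gdiam d S > c"
  shows "\<exists>p\<in>S. \<exists>q\<in>S. d p q > c"
proof (rule ccontr)
  assume "\<not> ?thesis"
  then have "gdiam d S \<le> c" unfolding gdiam_def using assms
    by (auto intro!: cSUP_least simp: not_less)
  then show False using assms by simp
qed

lemma gdiam_lower:
  assumes "p \<in> S" "q \<in> S" "d p q > c" "\<And>p q. p \<in> S \<Longrightarrow> q \<in> S \<Longrightarrow> d p q \<le> M"
  shows "gdiam d S > c"
proof -
  have "bdd_above ((\<lambda>p. d (fst p) (snd p)) ` (S \<times> S))"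
    using assms(4) by (intro bdd_aboveI2[where M=M]) auto
  then have "d p q \<le> gdiam d S" unfolding gdiam_def
    using cSUP_upper[of "(p,q)" "S \<times> S" "\<lambda>p. d (fst p) (snd p)"] assms by auto
  then show ?thesis using assms by simp
qed

lemma dir_hyp_to_X:
  fixes X :: "'a::metric_space set" and f :: "nat \<Rightarrow> 'a \<Rightarrow> 'a"
  assumes cX: "compact X"
    and fX: "\<And>n. n \<ge> 1 \<Longrightarrow> f n ` X \<subseteq> X"
    and H: "strongly_sensitive (hyperspace X) hausdorff_dist (\<lambda>n A. omega f n ` A)"
  shows "strongly_sensitive X dist (omega f)"
proof -
  have bX: "bounded X" using cX compact_imp_bounded by blast
  obtain \<delta> where dpos: "\<delta> > 0" and D: "\<And>A \<U>. A \<in> hyperspace X \<Longrightarrow> gneighbourhood (hyperspace X) hausdorff_dist A \<U> \<Longrightarrow>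
        (\<exists>K. \<forall>n\<ge>K. gdiam hausdorff_dist ((\<lambda>A. omega f n ` A) ` \<U>) > \<delta>)"
    using H unfolding strongly_sensitive_def by blast
  have oX: "\<And>n x. x \<in> X \<Longrightarrow> omega f n x \<in> X" using omega_in[of f X] fX by blast
  show ?thesis unfolding strongly_sensitive_def
  proof (intro exI[of _ \<delta>] conjI dpos ballI allI impI)
    fix x U assume xX: "x \<in> X" and nU: "gneighbourhood X dist x U"
    then obtain e where epos: "e > 0" and eU: "{y\<in>X. dist x y < e} \<subseteq> U" and UX: "U \<subseteq> X"
      unfolding gneighbourhood_def by blast
    define \<U> where "\<U> = {B \<in> hyperspace X. hausdorff_dist {x} B < e}"
    have xH: "{x} \<in> hyperspace X" using xX unfolding hyperspace_def by auto
    have hd0: "hausdorff_dist {x} {x} = 0" unfolding hausdorff_dist_def by simp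
    have "gneighbourhood (hyperspace X) hausdorff_dist {x} \<U>"
      unfolding gneighbourhood_def \<U>_def using epos by auto
    then obtain K where K: "\<And>n. n \<ge> K \<Longrightarrow> gdiam hausdorff_dist ((\<lambda>A. omega f n ` A) ` \<U>) > \<delta>"
      using D[OF xH] by blast
    have sub: "B \<subseteq> U" "B \<noteq> {}" "B \<subseteq> X" if "B \<in> \<U>" for B
    proof -
      show "B \<subseteq> X" "B \<noteq> {}" using that unfolding \<U>_def hyperspace_def by auto
      show "B \<subseteq> U"
      proof
        fix b assume b: "b \<in> B"
        have "infdist b {x} \<le> hausdorff_dist B {x}"
          by (rule infdist_le_hd[OF bX]) (use b \<open>B \<subseteq> X\<close> xX in auto)
        moreover have "hausdorff_dist B {x} = hausdorff_dist {x} B"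
          unfolding hausdorff_dist_def by (simp add: max.commute)
        ultimately have "dist x b < e" using that unfolding \<U>_def by (simp add: dist_commute)
        then show "b \<in> U" using eU b \<open>B \<subseteq> X\<close> by auto
      qed
    qed
    show "\<exists>K. \<forall>n\<ge>K. gdiam dist (omega f n ` U) > \<delta>"
    proof (intro exI[of _ K] allI impI)
      fix n assume "n \<ge> K"
      have xU: "{x} \<in> \<U>" unfolding \<U>_def using xH hd0 epos by auto
      have "\<exists>P\<in>(\<lambda>A. omega f n ` A) ` \<U>. \<exists>Q\<in>(\<lambda>A. omega f n ` A) ` \<U>. hausdorff_dist P Q > \<delta>"
        by (rule gdiam_extract) (use K[OF \<open>n \<ge> K\<close>] xU in auto)
      then obtain P Q where PQ: "P \<in> (\<lambda>A. omega f n ` A) ` \<U>" "Q \<in> (\<lambda>A. omega f n ` A) ` \<U>"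
        "hausdorff_dist P Q > \<delta>" by blast
      then obtain A B where AB: "A \<in> \<U>" "B \<in> \<U>" "P = omega f n ` A" "Q = omega f n ` B" by blast
      then obtain p q where "p \<in> P" "q \<in> Q" "dist p q > \<delta>"
        using hd_extract[of P Q \<delta>] PQ(3) sub AB by auto
      then obtain a b where ab: "a \<in> U" "b \<in> U" "dist (omega f n a) (omega f n b) > \<delta>"
        using AB sub by auto
      show "gdiam dist (omega f n ` U) > \<delta>"
        by (rule gdiam_lower[where M="diameter X"]) (use ab UX oX bX in \<open>auto intro!: diameter_bounded_bound\<close>)
    qed
  qed
qed


lemma hd_small:
  fixes A H :: "'a::metric_space set"
  assumes "A \<noteq> {}" "H \<noteq> {}" "\<And>h. h \<in> H \<Longrightarrow> \<exists>a\<in>A. dist h a \<le> r"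
    "\<And>x. x \<in> A \<Longrightarrow> \<exists>h\<in>H. dist x h \<le> r"
  shows "hausdorff_dist A H \<le> r"
proof -
  have 1: "infdist x H \<le> r" if "x \<in> A" for x
    using assms(4)[OF that] infdist_le order_trans by blast
  have 2: "infdist h A \<le> r" if "h \<in> H" for h
    using assms(3)[OF that] infdist_le order_trans by blast
  show ?thesis unfolding hausdorff_dist_def using 1 2 assms(1,2) by (auto intro!: cSUP_least)
qed

lemma dir_X_to_hyp:
  fixes X :: "'a::metric_space set" and f :: "nat \<Rightarrow> 'a \<Rightarrow> 'a"
  assumes cX: "compact X"
    and cf: "\<And>n. n \<ge> 1 \<Longrightarrow> continuous_on X (f n)"
    and fX: "\<And>n. n \<ge> 1 \<Longrightarrow> f n ` X \<subseteq> X"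
    and S: "strongly_sensitive X dist (omega f)"
  shows "strongly_sensitive (hyperspace X) hausdorff_dist (\<lambda>n A. omega f n ` A)"
proof -
  have bX: "bounded X" using cX compact_imp_bounded by blast
  obtain \<delta> where dpos: "\<delta> > 0" and D: "\<And>x U. x \<in> X \<Longrightarrow> gneighbourhood X dist x U \<Longrightarrow>
        (\<exists>K. \<forall>n\<ge>K. gdiam dist (omega f n ` U) > \<delta>)"
    using S unfolding strongly_sensitive_def by blast
  have oX: "\<And>n x. x \<in> X \<Longrightarrow> omega f n x \<in> X" using omega_in[of f X] fX by blast
  show ?thesis unfolding strongly_sensitive_def
  proof (intro exI[of _ "\<delta>/2"] conjI ballI allI impI)
    show "\<delta>/2 > 0" using dpos by simp
    fix A \<U> assume AH: "A \<in> hyperspace X" and nU: "gneighbourhood (hyperspace X) hausdorff_dist A \<U>"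
    then obtain e where epos: "e > 0" and eU: "{B\<in>hyperspace X. hausdorff_dist A B < e} \<subseteq> \<U>"
      and UH: "\<U> \<subseteq> hyperspace X"
      unfolding gneighbourhood_def by blast
    have AX: "A \<subseteq> X" "compact A" "A \<noteq> {}" using AH unfolding hyperspace_def by auto
    obtain F where F: "finite F" "F \<subseteq> A" "A \<subseteq> (\<Union>a\<in>F. ball a (e/3))"
      using seq_compact_imp_totally_bounded[OF compact_imp_seq_compact[OF AX(2)]] epos
      by (meson divide_pos_pos zero_less_numeral)
    have Fne: "F \<noteq> {}" using F AX by auto
    define Ua where "Ua a = {y\<in>X. dist a y < e/3}" for a
    have "\<forall>a\<in>F. \<exists>K. \<forall>n\<ge>K. gdiam dist (omega f n ` Ua a) > \<delta>"
    proof
      fix a assume "a \<in> F"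
      then have aX: "a \<in> X" using F AX by auto
      have "gneighbourhood X dist a (Ua a)" unfolding gneighbourhood_def Ua_def
        using epos by (intro conjI exI[of _ "e/3"]) auto
      then show "\<exists>K. \<forall>n\<ge>K. gdiam dist (omega f n ` Ua a) > \<delta>" using D aX by blast
    qed
    then obtain Kf where Kf: "\<And>a n. a \<in> F \<Longrightarrow> n \<ge> Kf a \<Longrightarrow> gdiam dist (omega f n ` Ua a) > \<delta>"
      by metis
    obtain a0 where a0: "a0 \<in> F" using Fne by blast
    show "\<exists>K. \<forall>n\<ge>K. gdiam hausdorff_dist ((\<lambda>A. omega f n ` A) ` \<U>) > \<delta>/2"
    proof (intro exI[of _ "Max (Kf ` F)"] allI impI)
      fix n assume nK: "n \<ge> Max (Kf ` F)"
      have "\<forall>a\<in>F. \<exists>y\<in>Ua a. dist (omega f n y) (omega f n a0) > \<delta>/2"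
      proof
        fix a assume aF: "a \<in> F"
        have "Kf a \<le> Max (Kf ` F)" using F(1) aF by simp
        then have g: "gdiam dist (omega f n ` Ua a) > \<delta>" using Kf aF nK by simp
        have "a \<in> Ua a" using aF F AX epos unfolding Ua_def by auto
        then have "\<exists>p\<in>omega f n ` Ua a. \<exists>q\<in>omega f n ` Ua a. dist p q > \<delta>"
          by (intro gdiam_extract[OF _ g]) auto
        then obtain u v where uv: "u \<in> Ua a" "v \<in> Ua a" "dist (omega f n u) (omega f n v) > \<delta>"
          by blast
        have "dist (omega f n u) (omega f n v) \<le> dist (omega f n u) (omega f n a0) + dist (omega f n v) (omega f n a0)"
          by (rule dist_triangle2)
        then show "\<exists>y\<in>Ua a. dist (omega f n y) (omega f n a0) > \<delta>/2"
        proof (cases "dist (omega f n u) (omega f n a0) > \<delta>/2")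
          case True then show ?thesis using uv(1) by blast
        next
          case False
          then have "dist (omega f n v) (omega f n a0) > \<delta>/2" using uv(3) \<open>dist _ _ \<le> _\<close> by linarith
          then show ?thesis using uv(2) by blast
        qed
      qed
      then obtain y where y: "\<And>a. a \<in> F \<Longrightarrow> y a \<in> Ua a"
        "\<And>a. a \<in> F \<Longrightarrow> dist (omega f n (y a)) (omega f n a0) > \<delta>/2"
        by metis
      define G where "G = y ` F"
      define G' where "G' = insert a0 G"
      have GX: "G \<subseteq> X" "G' \<subseteq> X" using y(1) a0 F AX unfolding G_def G'_def Ua_def by auto
      have Gfin: "finite G" "finite G'" using F unfolding G_def G'_def by auto
      have Gne: "G \<noteq> {}" "G' \<noteq> {}" using Fne unfolding G_def G'_def by auto
      have close: "hausdorff_dist A H \<le> 2*e/3" if "H = G \<or> H = G'" for H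
      proof (rule hd_small)
        show "A \<noteq> {}" using AX by auto
        show "H \<noteq> {}" using that Gne by auto
        show "\<exists>a\<in>A. dist h a \<le> 2*e/3" if "h \<in> H" for h
        proof (cases "h = a0")
          case True then show ?thesis using a0 F epos by (intro bexI[of _ a0]) auto
        next
          case False
          then obtain a where "a \<in> F" "h = y a" using \<open>h \<in> H\<close> \<open>H = G \<or> H = G'\<close>
            unfolding G_def G'_def by auto
          then show ?thesis using y(1)[of a] F epos unfolding Ua_def
            by (intro bexI[of _ a]) (auto simp: dist_commute)
        qed
        show "\<exists>h\<in>H. dist x h \<le> 2*e/3" if "x \<in> A" for x
        proof -
          obtain a where a: "a \<in> F" "dist a x < e/3" using F(3) \<open>x \<in> A\<close> by auto
          have "y a \<in> H" using \<open>H = G \<or> H = G'\<close> a unfolding G_def G'_def by auto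
          moreover have "dist x (y a) \<le> dist x a + dist a (y a)" by (rule dist_triangle)
          ultimately show ?thesis using a y(1)[of a] unfolding Ua_def
            by (intro bexI[of _ "y a"]) (auto simp: dist_commute)
        qed
      qed
      have inU: "G \<in> \<U>" "G' \<in> \<U>"
      proof -
        have "G \<in> hyperspace X" "G' \<in> hyperspace X"
          using GX Gfin Gne finite_imp_compact unfolding hyperspace_def by auto
        then show "G \<in> \<U>" "G' \<in> \<U>" using close[of G] close[of G'] epos eU by auto
      qed
      have inf: "infdist (omega f n a0) (omega f n ` G) > \<delta>/2"
      proof -
        have "infdist (omega f n a0) (omega f n ` G) = Inf (dist (omega f n a0) ` (omega f n ` G))"
          unfolding infdist_def using Gne by auto
        also have "\<delta>/2 < \<dots>"
          using Gfin Gne y(2) unfolding G_def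
          by (subst finite_less_Inf_iff) (auto simp: dist_commute)
        finally show ?thesis .
      qed
      have "infdist (omega f n a0) (omega f n ` G) \<le> hausdorff_dist (omega f n ` G') (omega f n ` G)"
        by (rule infdist_le_hd[OF bX]) (use GX oX Gne in \<open>auto simp: G'_def\<close>)
      then have big: "hausdorff_dist (omega f n ` G') (omega f n ` G) > \<delta>/2" using inf by simp
      show "gdiam hausdorff_dist ((\<lambda>A. omega f n ` A) ` \<U>) > \<delta>/2"
      proof (rule gdiam_lower[where M="diameter X"])
        show "omega f n ` G' \<in> (\<lambda>A. omega f n ` A) ` \<U>" "omega f n ` G \<in> (\<lambda>A. omega f n ` A) ` \<U>"
          using inU by auto
        show "hausdorff_dist (omega f n ` G') (omega f n ` G) > \<delta>/2" by (rule big)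
        fix P Q assume "P \<in> (\<lambda>A. omega f n ` A) ` \<U>" "Q \<in> (\<lambda>A. omega f n ` A) ` \<U>"
        then obtain B C where "B \<in> \<U>" "C \<in> \<U>" "P = omega f n ` B" "Q = omega f n ` C" by blast
        then have "B \<subseteq> X" "C \<subseteq> X" "B \<noteq> {}" "C \<noteq> {}" using UH unfolding hyperspace_def by auto
        then show "hausdorff_dist P Q \<le> diameter X"
          using \<open>P = _\<close> \<open>Q = _\<close> oX by (intro hd_le_diam[OF bX]) auto
      qed
    qed
  qed
qed


theorem mainTheorem9:
  fixes X :: "'a::metric_space set" and f :: "nat \<Rightarrow> 'a \<Rightarrow> 'a"
  assumes "compact X"
    and "\<And>n. n \<ge> 1 \<Longrightarrow> continuous_on X (f n)"
    and "\<And>n. n \<ge> 1 \<Longrightarrow> f n ` X \<subseteq> X"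
  shows "strongly_sensitive (hyperspace X) hausdorff_dist (\<lambda>n A. omega f n ` A)
         \<longleftrightarrow> strongly_sensitive X dist (omega f)"
proof
  assume "strongly_sensitive (hyperspace X) hausdorff_dist (\<lambda>n A. omega f n ` A)"
  then show "strongly_sensitive X dist (omega f)" using dir_hyp_to_X[of X f] assms by blast
next
  assume "strongly_sensitive X dist (omega f)"
  then show "strongly_sensitive (hyperspace X) hausdorff_dist (\<lambda>n A. omega f n ` A)"
    using dir_X_to_hyp[of X f] assms by blast
qed

end
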